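(* Let $A\in\mathbb{R}^{n\times n}$ with $A\ge 0$, $B\in\mathbb{R}^{n\times m}$, $C\in\mathbb{R}^{p\times n}$. For gains $\overline{K},\underline{K}\in\mathbb{R}^{m\times n}$ and $\overline{L},\underline{L}\in\mathbb{R}^{n\times p}$ let \[ M=\begin{bmatrix} A & B\overline{K} & B\underline{K} \\ \overline{L}C & A-\overline{L}C+B\overline{K} & B\underline{K} \\ \underline{L}C & B\overline{K} & A-\underline{L}C+B\underline{K} \end{bmatrix} \] and $\mathcal{X}=\{(x,\overline{x},\underline{x}) : x,\overline{x},\underline{x}\in\mathbb{R}^n_+,\ \underline{x}\le x\le \overline{x}\}$. The following statements are equivalent: (i) There exist $K\in\mathbb{R}^{m\times n}$ and $L\in\mathbb{R}^{n\times p}$ such that $A-LC$ and $A+BK$ are Schur, $A-LC\ge 0$, $A+BK\ge0$ and $LC\ge 0$. (ii) There exist gains $\overline{K},\underline{K},\overline{L},\underline{L}$ with $\underline{L}C\ge 0$ such that $M$ is Schur (i.e., the closed-loop system $(x,\overline{x},\underline{x})(t+1)=M(x,\overline{x},\underline{x})(t)$ is asymptotically stable) and $\mathcal{X}$ is invariant under $(x,\overline{x},\underline{x})(t+1)=M(x,\overline{x},\underline{x})(t)$.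
   Context: All inequalities between matrices or vectors are element-wise; $\mathbb{R}^n_+$ is the closed nonnegative orthant. A square matrix is Schur if its spectral radius is less than $1$. The matrix $M$ is the closed-loop matrix of the system $x(t+1)=Ax(t)+Bu(t)$, $y(t)=Cx(t)$ with upper and lower Luenberger observers $\overline{x}(t+1)=(A-\overline{L}C)\overline{x}(t)+\overline{L}y(t)+Bu(t)$, $\underline{x}(t+1)=(A-\underline{L}C)\underline{x}(t)+\underline{L}y(t)+Bu(t)$ and feedback $u(t)=\underline{K}\,\underline{x}(t)+\overline{K}\,\overline{x}(t)$. Invariance of $\mathcal{X}$ means every trajectory starting in $\mathcal{X}$ stays in $\mathcal{X}$ for all $t\ge0$. *)

theory Defs
  imports "HOL-Analysis.Analysis"
begin

definition nonneg_mat :: "real^'c^'r \<Rightarrow> bool" where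
  "nonneg_mat X \<longleftrightarrow> (\<forall>i j. 0 \<le> X $ i $ j)"

definition nonneg_vec :: "real^'n \<Rightarrow> bool" where
  "nonneg_vec v \<longleftrightarrow> (\<forall>i. 0 \<le> v $ i)"

definition vec_le :: "real^'n \<Rightarrow> real^'n \<Rightarrow> bool" where
  "vec_le u v \<longleftrightarrow> (\<forall>i. u $ i \<le> v $ i)"

text \<open>Schur: spectral radius < 1, i.e. every (complex) eigenvalue has modulus < 1.\<close>
definition schur :: "real^'n^'n \<Rightarrow> bool" where
  "schur X \<longleftrightarrow>
     (\<forall>l::complex. det (mat l - (\<chi> i j. complex_of_real (X $ i $ j))) = 0 \<longrightarrow> cmod l < 1)"

text \<open>Stacked state (x, xbar, xund) indexed by 'n + 'n + 'n.\<close>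
definition comp_x :: "real^('n + 'n + 'n) \<Rightarrow> real^'n" where
  "comp_x z = (\<chi> i. z $ Inl i)"
definition comp_xo :: "real^('n + 'n + 'n) \<Rightarrow> real^'n" where
  "comp_xo z = (\<chi> i. z $ Inr (Inl i))"
definition comp_xu :: "real^('n + 'n + 'n) \<Rightarrow> real^'n" where
  "comp_xu z = (\<chi> i. z $ Inr (Inr i))"

definition block3 ::
  "real^'n^'n \<Rightarrow> real^'n^'n \<Rightarrow> real^'n^'n \<Rightarrow>
   real^'n^'n \<Rightarrow> real^'n^'n \<Rightarrow> real^'n^'n \<Rightarrow>
   real^'n^'n \<Rightarrow> real^'n^'n \<Rightarrow> real^'n^'n \<Rightarrow> real^('n + 'n + 'n)^('n + 'n + 'n)" where
  "block3 M11 M12 M13 M21 M22 M23 M31 M32 M33 =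
    (\<chi> r c. (case r of
        Inl i \<Rightarrow> (case c of Inl j \<Rightarrow> M11$i$j | Inr (Inl j) \<Rightarrow> M12$i$j | Inr (Inr j) \<Rightarrow> M13$i$j)
      | Inr (Inl i) \<Rightarrow> (case c of Inl j \<Rightarrow> M21$i$j | Inr (Inl j) \<Rightarrow> M22$i$j | Inr (Inr j) \<Rightarrow> M23$i$j)
      | Inr (Inr i) \<Rightarrow> (case c of Inl j \<Rightarrow> M31$i$j | Inr (Inl j) \<Rightarrow> M32$i$j | Inr (Inr j) \<Rightarrow> M33$i$j)))"

definition closed_loop ::
  "real^'n^'n \<Rightarrow> real^'m^'n \<Rightarrow> real^'n^'p \<Rightarrow> real^'n^'m \<Rightarrow> real^'n^'m \<Rightarrow>
   real^'p^'n \<Rightarrow> real^'p^'n \<Rightarrow> real^('n + 'n + 'n)^('n + 'n + 'n)" where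
  "closed_loop A B C Ko Ku Lo Lu =
     block3 A (B ** Ko) (B ** Ku)
            (Lo ** C) (A - Lo ** C + B ** Ko) (B ** Ku)
            (Lu ** C) (B ** Ko) (A - Lu ** C + B ** Ku)"

definition X_set :: "(real^('n::finite + 'n + 'n)) set" where
  "X_set = {z. nonneg_vec (comp_x z) \<and> nonneg_vec (comp_xo z) \<and> nonneg_vec (comp_xu z)
               \<and> vec_le (comp_xu z) (comp_x z) \<and> vec_le (comp_x z) (comp_xo z)}"

definition invariant_set :: "real^'k^'k \<Rightarrow> (real^'k) set \<Rightarrow> bool" where
  "invariant_set M S \<longleftrightarrow> (\<forall>z0\<in>S. \<forall>t::nat. (((*v) M) ^^ t) z0 \<in> S)"

end

theory Submission
  imports Defs
begin

definition join3 :: "'a^'n \<Rightarrow> 'a^'n \<Rightarrow> 'a^'n \<Rightarrow> 'a^('n+'n+'n)" where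
  "join3 a b c = (\<chi> r. case r of Inl i \<Rightarrow> a$i | Inr (Inl i) \<Rightarrow> b$i | Inr (Inr i) \<Rightarrow> c$i)"
definition p1 :: "'a^('n+'n+'n) \<Rightarrow> 'a^'n" where "p1 z = (\<chi> i. z $ Inl i)"
definition p2 :: "'a^('n+'n+'n) \<Rightarrow> 'a^'n" where "p2 z = (\<chi> i. z $ Inr (Inl i))"
definition p3 :: "'a^('n+'n+'n) \<Rightarrow> 'a^'n" where "p3 z = (\<chi> i. z $ Inr (Inr i))"

definition gblock3 ::
  "'a^'n^'n \<Rightarrow> 'a^'n^'n \<Rightarrow> 'a^'n^'n \<Rightarrow>
   'a^'n^'n \<Rightarrow> 'a^'n^'n \<Rightarrow> 'a^'n^'n \<Rightarrow>
   'a^'n^'n \<Rightarrow> 'a^'n^'n \<Rightarrow> 'a^'n^'n \<Rightarrow> 'a^('n + 'n + 'n)^('n + 'n + 'n)" where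
  "gblock3 M11 M12 M13 M21 M22 M23 M31 M32 M33 =
    (\<chi> r c. (case r of
        Inl i \<Rightarrow> (case c of Inl j \<Rightarrow> M11$i$j | Inr (Inl j) \<Rightarrow> M12$i$j | Inr (Inr j) \<Rightarrow> M13$i$j)
      | Inr (Inl i) \<Rightarrow> (case c of Inl j \<Rightarrow> M21$i$j | Inr (Inl j) \<Rightarrow> M22$i$j | Inr (Inr j) \<Rightarrow> M23$i$j)
      | Inr (Inr i) \<Rightarrow> (case c of Inl j \<Rightarrow> M31$i$j | Inr (Inl j) \<Rightarrow> M32$i$j | Inr (Inr j) \<Rightarrow> M33$i$j)))"

lemma block3_g: "block3 = gblock3"
  by (intro ext) (simp add: block3_def gblock3_def)

lemma comp_p: "comp_x = p1" "comp_xo = p2" "comp_xu = p3"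
  by (auto simp: comp_x_def comp_xo_def comp_xu_def p1_def p2_def p3_def fun_eq_iff)

lemma p_join[simp]: "p1 (join3 a b c) = a" "p2 (join3 a b c) = b" "p3 (join3 a b c) = c"
  by (auto simp: join3_def p1_def p2_def p3_def vec_eq_iff)

lemma join_p: "join3 (p1 z) (p2 z) (p3 z) = z"
  by (auto simp: join3_def p1_def p2_def p3_def vec_eq_iff split: sum.splits)

lemma p_zero[simp]: "p1 0 = 0" "p2 0 = 0" "p3 0 = 0"
  by (simp_all add: p1_def p2_def p3_def vec_eq_iff)

lemma join_eq0[simp]: "join3 a b c = 0 \<longleftrightarrow> a = 0 \<and> b = 0 \<and> c = 0"
proof
  assume h: "join3 a b c = 0"
  have "a = p1 (join3 a b c)" "b = p2 (join3 a b c)" "c = p3 (join3 a b c)" by simp_all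
  then show "a = 0 \<and> b = 0 \<and> c = 0" unfolding h by simp
next
  assume "a = 0 \<and> b = 0 \<and> c = 0"
  then show "join3 a b c = 0" by (auto simp: join3_def vec_eq_iff split: sum.splits)
qed

lemma join_smult: "l *s join3 a b c = join3 (l *s a) (l *s b) (l *s c)"
  by (auto simp: join3_def vec_eq_iff split: sum.splits)

lemma sum_UNIV3: "sum (f :: ('n::finite+'n+'n) \<Rightarrow> 'a::comm_monoid_add) UNIV =
   sum (\<lambda>j. f (Inl j)) UNIV + sum (\<lambda>j. f (Inr (Inl j))) UNIV + sum (\<lambda>j. f (Inr (Inr j))) UNIV"
proof -
  have "sum f UNIV = sum f (UNIV <+> (UNIV <+> UNIV))" by simp
  also have "\<dots> = sum (\<lambda>j. f (Inl j)) UNIV + sum (\<lambda>j. f (Inr j)) (UNIV <+> UNIV)"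
    by (subst sum.Plus) (auto simp: o_def)
  also have "sum (\<lambda>j. f (Inr j)) (UNIV <+> UNIV) = sum (\<lambda>j. f (Inr (Inl j))) UNIV + sum (\<lambda>j. f (Inr (Inr j))) UNIV"
    by (subst sum.Plus) (auto simp: o_def)
  finally show ?thesis by (simp add: add.assoc)
qed

lemma gblock3_mult:
  fixes M11 :: "'a::comm_semiring_1^'n^'n"
  shows "gblock3 M11 M12 M13 M21 M22 M23 M31 M32 M33 *v w =
    join3 (M11 *v p1 w + M12 *v p2 w + M13 *v p3 w)
          (M21 *v p1 w + M22 *v p2 w + M23 *v p3 w)
          (M31 *v p1 w + M32 *v p2 w + M33 *v p3 w)"
  unfolding vec_eq_iff
proof
  fix r
  show "(gblock3 M11 M12 M13 M21 M22 M23 M31 M32 M33 *v w) $ r = join3 (M11 *v p1 w + M12 *v p2 w + M13 *v p3 w)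
          (M21 *v p1 w + M22 *v p2 w + M23 *v p3 w)
          (M31 *v p1 w + M32 *v p2 w + M33 *v p3 w) $ r"
    by (auto simp: gblock3_def join3_def matrix_vector_mult_def sum_UNIV3 p1_def p2_def p3_def split: sum.splits)
qed

lemma gblock3_transpose:
  "transpose (gblock3 M11 M12 M13 M21 M22 M23 M31 M32 M33) =
   gblock3 (transpose M11) (transpose M21) (transpose M31) (transpose M12) (transpose M22) (transpose M32)
     (transpose M13) (transpose M23) (transpose M33)"
  by (auto simp: vec_eq_iff gblock3_def transpose_def split: sum.splits)

definition cm :: "real^'c^'r \<Rightarrow> complex^'c^'r" where
  "cm X = (\<chi> i j. complex_of_real (X $ i $ j))"

lemma cm_mult: "cm (X ** Y) = cm X ** cm Y"
  by (simp add: cm_def matrix_matrix_mult_def vec_eq_iff)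
lemma cm_add: "cm (X + Y) = cm X + cm Y"
  by (simp add: cm_def vec_eq_iff)
lemma cm_diff: "cm (X - Y) = cm X - cm Y"
  by (simp add: cm_def vec_eq_iff)
lemma cm_zero: "cm 0 = 0"
  by (simp add: cm_def vec_eq_iff)
lemma cm_gblock3: "cm (gblock3 M11 M12 M13 M21 M22 M23 M31 M32 M33) =
   gblock3 (cm M11) (cm M12) (cm M13) (cm M21) (cm M22) (cm M23) (cm M31) (cm M32) (cm M33)"
  by (auto simp: vec_eq_iff gblock3_def cm_def split: sum.splits)

lemma det0_iff: fixes Y :: "'a::field^'n^'n" shows "det Y = 0 \<longleftrightarrow> (\<exists>x. x \<noteq> 0 \<and> Y *v x = 0)"
proof -
  have "det Y \<noteq> 0 \<longleftrightarrow> (\<forall>x. Y *v x = 0 \<longrightarrow> x = 0)"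
    unfolding invertible_det_nz[symmetric] invertible_left_inverse matrix_left_invertible_ker ..
  then show ?thesis by blast
qed

lemma mat_smult: "mat l *v v = l *s v"
proof -
  have "\<And>i. (\<Sum>j\<in>UNIV. (if i = j then l else 0) * v $ j) = l * v $ i"
  proof -
    fix i
    have "(\<Sum>j\<in>UNIV. (if i = j then l else 0) * v $ j) = (\<Sum>j\<in>UNIV. if i = j then l * v $ j else 0)"
      by (rule sum.cong) auto
    then show "(\<Sum>j\<in>UNIV. (if i = j then l else 0) * v $ j) = l * v $ i" by simp
  qed
  then show ?thesis by (simp add: vec_eq_iff matrix_vector_mult_def mat_def)
qed

lemma eig_iff: fixes Y :: "'a::field^'n^'n"
  shows "det (mat l - Y) = 0 \<longleftrightarrow> (\<exists>v. v \<noteq> 0 \<and> Y *v v = l *s v)"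
proof -
  have "\<And>v. (mat l - Y) *v v = 0 \<longleftrightarrow> Y *v v = l *s v"
  proof -
    fix v
    have "(mat l - Y) *v v = l *s v - Y *v v"
      by (simp only: matrix_vector_mult_diff_rdistrib mat_smult)
    then show "(mat l - Y) *v v = 0 \<longleftrightarrow> Y *v v = l *s v" by auto
  qed
  then show ?thesis unfolding det0_iff by blast
qed

lemma eig_iff_T: fixes Y :: "'a::field^'n^'n"
  shows "det (mat l - Y) = 0 \<longleftrightarrow> (\<exists>v. v \<noteq> 0 \<and> transpose Y *v v = l *s v)"
proof -
  have t: "transpose (mat l - Y) = mat l - transpose Y"
    by (simp add: vec_eq_iff transpose_def mat_def)
  have "det (mat l - Y) = det (mat l - transpose Y)"
    by (rule trans[OF sym[OF det_transpose[of "mat l - Y"]] arg_cong[OF t, of det]])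
  then show ?thesis using eig_iff[of l "transpose Y"] by (simp only:)
qed

lemma schur_iff: "schur X \<longleftrightarrow> (\<forall>l v. v \<noteq> 0 \<longrightarrow> cm X *v v = l *s v \<longrightarrow> cmod l < 1)"
  unfolding schur_def cm_def[symmetric] eig_iff by blast

lemma schur_iff_T: "schur X \<longleftrightarrow> (\<forall>l v. v \<noteq> 0 \<longrightarrow> transpose (cm X) *v v = l *s v \<longrightarrow> cmod l < 1)"
  unfolding schur_def cm_def[symmetric] eig_iff_T by blast

lemma mv_neg: fixes A :: "'a::ring_1^'n^'m" shows "A *v (- x) = - (A *v x)"
  using matrix_vector_mult_diff_distrib[of A 0 x] by simp

lemma transpose_add': "transpose (X + Y) = transpose X + transpose Y"
  by (simp add: vec_eq_iff transpose_def)
lemma transpose_diff': "transpose (X - Y) = transpose X - (transpose Y :: 'a::ab_group_add^_^_)"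
  by (simp add: vec_eq_iff transpose_def)

lemma mv_axis: "((X::real^'n^'m) *v axis j 1) $ i = X $ i $ j"
proof -
  have "(\<Sum>k\<in>UNIV. X $ i $ k * axis j 1 $ k) = (\<Sum>k\<in>UNIV. if k = j then X $ i $ k else 0)"
    by (rule sum.cong) (auto simp: axis_def)
  then show ?thesis by (simp add: matrix_vector_mult_def)
qed

lemma nn_mv: "nonneg_mat P \<Longrightarrow> nonneg_vec v \<Longrightarrow> nonneg_vec (P *v v)"
  unfolding nonneg_mat_def nonneg_vec_def matrix_vector_mult_def
  by (auto intro!: sum_nonneg)
lemma nn_add: "nonneg_vec a \<Longrightarrow> nonneg_vec b \<Longrightarrow> nonneg_vec (a + b)"
  unfolding nonneg_vec_def by auto
lemma nn_mat_add: "nonneg_mat a \<Longrightarrow> nonneg_mat b \<Longrightarrow> nonneg_mat (a + b)"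
  unfolding nonneg_mat_def by auto
lemma vec_le_nn: "vec_le u v \<longleftrightarrow> nonneg_vec (v - u)"
  unfolding nonneg_vec_def vec_le_def by auto

lemma invariant_step: assumes "\<And>z. z \<in> S \<Longrightarrow> M *v z \<in> S" shows "invariant_set M S"
  unfolding invariant_set_def
proof (intro ballI allI)
  fix z0 t assume "z0 \<in> S"
  then show "((*v) M ^^ t) z0 \<in> S" by (induction t) (auto intro: assms)
qed

lemma X_set_iff: "z \<in> X_set \<longleftrightarrow> nonneg_vec (p1 z) \<and> nonneg_vec (p2 z) \<and> nonneg_vec (p3 z)
    \<and> nonneg_vec (p1 z - p3 z) \<and> nonneg_vec (p2 z - p1 z)"
  by (simp add: X_set_def comp_p vec_le_nn)

lemma g1: "(y::'a::ab_group_add) + (x - y + z) + w = x + z + w" by (simp add: algebra_simps)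
lemma g2: "(y::'a::ab_group_add) + z + (x - y + w) = x + z + w" by (simp add: algebra_simps)
lemma g3: "(x::'a::ab_group_add) + 0 + - y = x - y" by simp
lemma g4: "(x::'a::ab_group_add) + 0 + - x = 0" by simp
lemma g5: "(z::'a::ab_group_add) + 0 + - (x - y + z) = - (x - y)" by (simp add: algebra_simps)
lemma smult_neg: "- ((l::'a::ring_1) *s u) = l *s (- u)" by (simp add: vec_eq_iff)
lemma smult_zero': "(l::'a::ring_1) *s 0 = 0" by (simp add: vec_eq_iff)

lemma sK_lem:
  fixes a bo bu qo qu :: "complex^'n^'n"
  assumes sM': "\<And>l w. w \<noteq> 0 \<Longrightarrow> gblock3 a bo bu qo (a - qo + bo) bu qu bo (a - qu + bu) *v w = l *s w \<Longrightarrow> cmod l < 1"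
    and v0: "v \<noteq> 0" and ev: "a *v v + bo *v v + bu *v v = l *s v"
  shows "cmod l < 1"
proof -
  have r2: "qo *v v + (a - qo + bo) *v v + bu *v v = a *v v + bo *v v + bu *v v"
    by (simp only: matrix_vector_mult_add_rdistrib matrix_vector_mult_diff_rdistrib g1)
  have r3: "qu *v v + bo *v v + (a - qu + bu) *v v = a *v v + bo *v v + bu *v v"
    by (simp only: matrix_vector_mult_add_rdistrib matrix_vector_mult_diff_rdistrib g2)
  have "gblock3 a bo bu qo (a - qo + bo) bu qu bo (a - qu + bu) *v join3 v v v = join3 (a *v v + bo *v v + bu *v v)
       (qo *v v + (a - qo + bo) *v v + bu *v v) (qu *v v + bo *v v + (a - qu + bu) *v v)"
    unfolding gblock3_mult p_join ..
  also have "\<dots> = join3 (l *s v) (l *s v) (l *s v)"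
    unfolding r2 r3 ev ..
  also have "\<dots> = l *s join3 v v v" by (simp only: join_smult)
  finally have eq: "gblock3 a bo bu qo (a - qo + bo) bu qu bo (a - qu + bu) *v join3 v v v = l *s join3 v v v" .
  have nz: "join3 v v v \<noteq> 0" using v0 unfolding join_eq0 by blast
  show ?thesis by (rule sM'[OF nz eq])
qed

lemma sL_lem:
  fixes a bo bu qo qu :: "complex^'n^'n"
  assumes sM': "\<And>l w. w \<noteq> 0 \<Longrightarrow> transpose (gblock3 a bo bu qo (a - qo + bo) bu qu bo (a - qu + bu)) *v w = l *s w \<Longrightarrow> cmod l < 1"
    and u0: "u \<noteq> 0" and ev: "transpose a *v u - transpose qu *v u = l *s u"
  shows "cmod l < 1"
proof -
  have r1: "transpose a *v u + transpose qo *v 0 + transpose qu *v (- u) = l *s u"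
    unfolding matrix_vector_mult_0_right mv_neg g3 by (rule ev)
  have r2: "transpose bo *v u + transpose (a - qo + bo) *v 0 + transpose bo *v (- u) = l *s 0"
    unfolding matrix_vector_mult_0_right mv_neg g4 smult_zero' ..
  have r3: "transpose bu *v u + transpose bu *v 0 + transpose (a - qu + bu) *v (- u) = l *s (- u)"
  proof -
    have "transpose bu *v u + transpose bu *v 0 + transpose (a - qu + bu) *v (- u)
       = - (transpose a *v u - transpose qu *v u)"
      unfolding transpose_add' transpose_diff' mv_neg matrix_vector_mult_add_rdistrib matrix_vector_mult_diff_rdistrib
        matrix_vector_mult_0_right g5 ..
    also have "\<dots> = l *s (- u)" unfolding ev smult_neg ..
    finally show ?thesis .
  qed
  have "transpose (gblock3 a bo bu qo (a - qo + bo) bu qu bo (a - qu + bu)) *v join3 u 0 (- u) =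
      join3 (transpose a *v u + transpose qo *v 0 + transpose qu *v (- u))
            (transpose bo *v u + transpose (a - qo + bo) *v 0 + transpose bo *v (- u))
            (transpose bu *v u + transpose bu *v 0 + transpose (a - qu + bu) *v (- u))"
    unfolding gblock3_transpose gblock3_mult p_join ..
  also have "\<dots> = join3 (l *s u) (l *s 0) (l *s (- u))"
    unfolding r1 r2 r3 ..
  also have "\<dots> = l *s join3 u 0 (- u)" by (simp only: join_smult)
  finally have eq: "transpose (gblock3 a bo bu qo (a - qo + bo) bu qu bo (a - qu + bu)) *v join3 u 0 (- u) = l *s join3 u 0 (- u)" .
  have nz: "join3 u 0 (- u) \<noteq> 0" using u0 unfolding join_eq0 by blast
  show ?thesis by (rule sM'[OF nz eq])
qed

theorem theorem1:
  fixes A :: "real^'n^'n" and B :: "real^'m^'n" and C :: "real^'n^'p"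
  assumes "nonneg_mat A"
  shows "(\<exists>(K :: real^'n^'m) (L :: real^'p^'n).
            schur (A - L ** C) \<and> schur (A + B ** K) \<and>
            nonneg_mat (A - L ** C) \<and> nonneg_mat (A + B ** K) \<and> nonneg_mat (L ** C))
     \<longleftrightarrow>
         (\<exists>(Ko :: real^'n^'m) (Ku :: real^'n^'m) (Lo :: real^'p^'n) (Lu :: real^'p^'n).
            nonneg_mat (Lu ** C) \<and>
            schur (closed_loop A B C Ko Ku Lo Lu) \<and>
            invariant_set (closed_loop A B C Ko Ku Lo Lu) X_set)"
proof
  assume "\<exists>(K :: real^'n^'m) (L :: real^'p^'n).
            schur (A - L ** C) \<and> schur (A + B ** K) \<and>
            nonneg_mat (A - L ** C) \<and> nonneg_mat (A + B ** K) \<and> nonneg_mat (L ** C)"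
  then obtain K :: "real^'n^'m" and L :: "real^'p^'n" where
    sQ: "schur (A - L ** C)" and sP: "schur (A + B ** K)" and
    nQ: "nonneg_mat (A - L ** C)" and nP: "nonneg_mat (A + B ** K)" and nL: "nonneg_mat (L ** C)"
    by blast
  define P where "P = B ** K"
  define Q where "Q = L ** C"
  define M where "M = closed_loop A B C 0 K L L"
  have B0: "B ** (0::real^'n^'m) = 0" by (simp add: vec_eq_iff matrix_matrix_mult_def)
  have Mdef: "M = gblock3 A 0 P Q (A - Q) P Q 0 (A - Q + P)"
    unfolding M_def closed_loop_def block3_g P_def Q_def B0 by simp
  have inv: "invariant_set M X_set"
  proof (rule invariant_step)
    fix z :: "real^('n+'n+'n)" assume z: "z \<in> X_set"
    define x where "x = p1 z"
    define xo where "xo = p2 z"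
    define xu where "xu = p3 z"
    have zx: "nonneg_vec x" "nonneg_vec xo" "nonneg_vec xu" "nonneg_vec (x - xu)" "nonneg_vec (xo - x)"
      using z unfolding X_set_iff x_def xo_def xu_def by auto
    have Mz: "M *v z = join3 (A *v x + P *v xu) (Q *v x + (A - Q) *v xo + P *v xu) (Q *v x + (A - Q + P) *v xu)"
      unfolding Mdef gblock3_mult x_def xo_def xu_def by simp
    have e1: "A *v x + P *v xu = (A + P) *v xu + A *v (x - xu)" by (simp add: algebra_simps)
    have e2: "Q *v x + (A - Q) *v xo + P *v xu = (A *v x + P *v xu) + (A - Q) *v (xo - x)" by (simp add: algebra_simps)
    have e3: "Q *v x + (A - Q + P) *v xu = (A + P) *v xu + Q *v (x - xu)" by (simp add: algebra_simps)
    have e4: "(A *v x + P *v xu) - (Q *v x + (A - Q + P) *v xu) = (A - Q) *v (x - xu)" by (simp add: algebra_simps)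
    have e5: "(Q *v x + (A - Q) *v xo + P *v xu) - (A *v x + P *v xu) = (A - Q) *v (xo - x)" by (simp add: algebra_simps)
    have n1: "nonneg_vec (A *v x + P *v xu)" unfolding e1
      using nP zx assms unfolding P_def by (intro nn_add nn_mv) auto
    have n2: "nonneg_vec (Q *v x + (A - Q) *v xo + P *v xu)" unfolding e2
      using nQ zx unfolding Q_def by (intro nn_add[OF n1] nn_mv) auto
    have n3: "nonneg_vec (Q *v x + (A - Q + P) *v xu)" unfolding e3
      using nP nL zx unfolding P_def Q_def by (intro nn_add nn_mv) auto
    have n4: "nonneg_vec ((A *v x + P *v xu) - (Q *v x + (A - Q + P) *v xu))" unfolding e4
      using nQ zx unfolding Q_def by (intro nn_mv) auto
    have n5: "nonneg_vec ((Q *v x + (A - Q) *v xo + P *v xu) - (A *v x + P *v xu))" unfolding e5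
      using nQ zx unfolding Q_def by (intro nn_mv) auto
    show "M *v z \<in> X_set" unfolding X_set_iff Mz p_join using n1 n2 n3 n4 n5 by auto
  qed
  have sM: "schur M"
    unfolding schur_iff
  proof (intro allI impI)
    fix l v assume v0: "v \<noteq> 0" and ev: "cm M *v v = l *s v"
    define a where "a = cm A"
    define p where "p = cm P"
    define q where "q = cm Q"
    define x where "x = p1 v"
    define xo where "xo = p2 v"
    define xu where "xu = p3 v"
    have cmM: "cm M = gblock3 a 0 p q (a - q) p q 0 (a - q + p)"
      unfolding Mdef cm_gblock3 cm_add cm_diff cm_zero a_def p_def q_def ..
    have vj: "v = join3 x xo xu" unfolding x_def xo_def xu_def join_p ..
    have "cm M *v join3 x xo xu = l *s join3 x xo xu" using ev vj by simp
    then have EE: "join3 (a *v x + 0 *v xo + p *v xu) (q *v x + (a - q) *v xo + p *v xu) (q *v x + 0 *v xo + (a - q + p) *v xu)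
       = join3 (l *s x) (l *s xo) (l *s xu)"
      unfolding cmM gblock3_mult p_join join_smult .
    have E1: "a *v x + p *v xu = l *s x" using arg_cong[OF EE, of p1] by simp
    have E2: "q *v x + (a - q) *v xo + p *v xu = l *s xo" using arg_cong[OF EE, of p2] by simp
    have E3: "q *v x + (a - q + p) *v xu = l *s xu" using arg_cong[OF EE, of p3] by simp
    have sQ': "\<And>w. w \<noteq> 0 \<Longrightarrow> (a - q) *v w = l *s w \<Longrightarrow> cmod l < 1"
      using sQ unfolding schur_iff a_def q_def Q_def cm_diff by blast
    have sP': "\<And>w. w \<noteq> 0 \<Longrightarrow> (a + p) *v w = l *s w \<Longrightarrow> cmod l < 1"
      using sP unfolding schur_iff a_def p_def P_def cm_add by blast
    show "cmod l < 1"
    proof (cases "x - xu = 0")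
      case False
      have "(a - q) *v (x - xu) = (a *v x + p *v xu) - (q *v x + (a - q + p) *v xu)"
        by (simp add: algebra_simps)
      also have "\<dots> = l *s (x - xu)" using E1 E3 by (simp add: algebra_simps)
      finally show ?thesis using sQ' False by blast
    next
      case True
      then have xe: "xu = x" by simp
      show ?thesis
      proof (cases "x = 0")
        case False
        have "(a + p) *v x = l *s x" using E1 xe by (simp add: algebra_simps)
        then show ?thesis using sP' False by blast
      next
        case True
        then have "xo \<noteq> 0" using v0 xe vj by auto
        moreover have "(a - q) *v xo = l *s xo" using E2 True xe by simp
        ultimately show ?thesis using sQ' by blast
      qed
    qed
  qed
  have "nonneg_mat (L ** C)" by (rule nL)
  then show "\<exists>(Ko :: real^'n^'m) (Ku :: real^'n^'m) (Lo :: real^'p^'n) (Lu :: real^'p^'n).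
            nonneg_mat (Lu ** C) \<and>
            schur (closed_loop A B C Ko Ku Lo Lu) \<and>
            invariant_set (closed_loop A B C Ko Ku Lo Lu) X_set"
    using sM inv unfolding M_def by blast
next
  assume "\<exists>(Ko :: real^'n^'m) (Ku :: real^'n^'m) (Lo :: real^'p^'n) (Lu :: real^'p^'n).
            nonneg_mat (Lu ** C) \<and>
            schur (closed_loop A B C Ko Ku Lo Lu) \<and>
            invariant_set (closed_loop A B C Ko Ku Lo Lu) X_set"
  then obtain Ko Ku :: "real^'n^'m" and Lo Lu :: "real^'p^'n" where
    nLu: "nonneg_mat (Lu ** C)" and sM: "schur (closed_loop A B C Ko Ku Lo Lu)" and
    inv: "invariant_set (closed_loop A B C Ko Ku Lo Lu) X_set" by blast
  define M where "M = closed_loop A B C Ko Ku Lo Lu"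
  define Bo where "Bo = B ** Ko"
  define Bu where "Bu = B ** Ku"
  define Qo where "Qo = Lo ** C"
  define Qu where "Qu = Lu ** C"
  have Mdef: "M = gblock3 A Bo Bu Qo (A - Qo + Bo) Bu Qu Bo (A - Qu + Bu)"
    unfolding M_def closed_loop_def block3_g Bo_def Bu_def Qo_def Qu_def ..
  have BK: "B ** (Ko + Ku) = Bo + Bu" unfolding Bo_def Bu_def by (rule matrix_add_ldistrib)
  have step: "\<And>z. z \<in> X_set \<Longrightarrow> M *v z \<in> X_set"
  proof -
    fix z :: "real^('n+'n+'n)" assume "z \<in> X_set"
    then have "((*v) M ^^ 1) z \<in> X_set" using inv unfolding M_def invariant_set_def by blast
    then show "M *v z \<in> X_set" by simp
  qed
  have nK: "nonneg_mat (A + B ** (Ko + Ku))"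
    unfolding nonneg_mat_def
  proof (intro allI)
    fix i j
    define e where "e = (axis j 1 :: real^'n)"
    have ne: "nonneg_vec e" unfolding nonneg_vec_def e_def axis_def by auto
    have z0: "nonneg_vec (0::real^'n)" unfolding nonneg_vec_def by simp
    have "join3 e e e \<in> X_set" unfolding X_set_iff p_join diff_self using ne z0 by blast
    then have "M *v join3 e e e \<in> X_set" by (rule step)
    then have h: "nonneg_vec (p1 (M *v join3 e e e))" unfolding X_set_iff by blast
    have "p1 (M *v join3 e e e) = A *v e + Bo *v e + Bu *v e"
      unfolding Mdef gblock3_mult p_join ..
    also have "A *v e + Bo *v e + Bu *v e = (A + B ** (Ko + Ku)) *v e"
      unfolding BK by (simp only: matrix_vector_mult_add_rdistrib add.assoc)
    finally have "nonneg_vec ((A + B ** (Ko + Ku)) *v e)" using h by simp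
    then show "0 \<le> (A + B ** (Ko + Ku)) $ i $ j"
      unfolding nonneg_vec_def e_def mv_axis by blast
  qed
  have nQ: "nonneg_mat (A - Lu ** C)"
    unfolding nonneg_mat_def
  proof (intro allI)
    fix i j
    define e where "e = (axis j 1 :: real^'n)"
    have ne: "nonneg_vec e" unfolding nonneg_vec_def e_def axis_def by auto
    have z0: "nonneg_vec (0::real^'n)" unfolding nonneg_vec_def by simp
    have "join3 e e 0 \<in> X_set" unfolding X_set_iff p_join diff_self diff_zero using ne z0 by blast
    then have "M *v join3 e e 0 \<in> X_set" by (rule step)
    then have h: "nonneg_vec (p1 (M *v join3 e e 0) - p3 (M *v join3 e e 0))" unfolding X_set_iff by blast
    have "p1 (M *v join3 e e 0) - p3 (M *v join3 e e 0) =
       (A *v e + Bo *v e + Bu *v 0) - (Qu *v e + Bo *v e + (A - Qu + Bu) *v 0)"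
      unfolding Mdef gblock3_mult p_join ..
    also have "\<dots> = (A - Lu ** C) *v e"
      unfolding Qu_def by (simp add: matrix_vector_mult_diff_rdistrib)
    finally have "nonneg_vec ((A - Lu ** C) *v e)" using h by simp
    then show "0 \<le> (A - Lu ** C) $ i $ j"
      unfolding nonneg_vec_def e_def mv_axis by blast
  qed
  define a where "a = cm A"
  define bo where "bo = cm Bo"
  define bu where "bu = cm Bu"
  define qo where "qo = cm Qo"
  define qu where "qu = cm Qu"
  have cmM: "cm M = gblock3 a bo bu qo (a - qo + bo) bu qu bo (a - qu + bu)"
    unfolding Mdef cm_gblock3 cm_add cm_diff a_def bo_def bu_def qo_def qu_def ..
  have sM': "\<And>l w. w \<noteq> 0 \<Longrightarrow> cm M *v w = l *s w \<Longrightarrow> cmod l < 1"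
    using sM unfolding M_def schur_iff by blast
  have sMT: "\<And>l w. w \<noteq> 0 \<Longrightarrow> transpose (cm M) *v w = l *s w \<Longrightarrow> cmod l < 1"
    using sM unfolding M_def schur_iff_T by blast
  have sK: "schur (A + B ** (Ko + Ku))"
    unfolding schur_iff
  proof (intro allI impI)
    fix l v assume v0: "v \<noteq> 0" and ev: "cm (A + B ** (Ko + Ku)) *v v = l *s v"
    have ev': "a *v v + bo *v v + bu *v v = l *s v"
      using ev unfolding BK cm_add a_def bo_def bu_def matrix_vector_mult_add_rdistrib add.assoc .
    show "cmod l < 1"
      by (rule sK_lem[OF _ v0 ev']) (rule sM'[unfolded cmM])
  qed
  have sL: "schur (A - Lu ** C)"
    unfolding schur_iff_T
  proof (intro allI impI)
    fix l u assume u0: "u \<noteq> 0" and ev: "transpose (cm (A - Lu ** C)) *v u = l *s u"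
    have ev': "transpose a *v u - transpose qu *v u = l *s u"
      using ev unfolding cm_diff a_def qu_def Qu_def transpose_diff' matrix_vector_mult_diff_rdistrib .
    show "cmod l < 1"
      by (rule sL_lem[OF _ u0 ev']) (rule sMT[unfolded cmM])
  qed
  show "\<exists>(K :: real^'n^'m) (L :: real^'p^'n).
            schur (A - L ** C) \<and> schur (A + B ** K) \<and>
            nonneg_mat (A - L ** C) \<and> nonneg_mat (A + B ** K) \<and> nonneg_mat (L ** C)"
    using sK sL nK nQ nLu by blast
qed

end
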